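(* Let $n\in\mathbb{N}$, $0<\beta\le n$ and $b\in\operatorname{BMO}^\beta(\mathbb{R}^n)$. Then there exists $C_\beta>0$ such that \[ |b_{2^kQ}-b_Q|\le C_\beta\,k\,\|b\|_{\operatorname{BMO}^\beta(\mathbb{R}^n)} \] for each cube $Q$ and each $k\in\mathbb{N}$.
   Context: $\mathcal{H}^\beta_\infty(E)=\inf\{\sum_i\omega_\beta r_i^\beta:E\subset\bigcup_iB(x_i,r_i)\}$, $\omega_\beta=\pi^{\beta/2}/\Gamma(\beta/2+1)$; integrals against $\mathcal{H}^\beta_\infty$ are Choquet integrals $\int_\Omega g\,d\mathcal{H}^\beta_\infty=\int_0^\infty\mathcal{H}^\beta_\infty(\{x\in\Omega:g>t\})\,dt$. Cubes are axis-parallel, $\ell(Q)$ is the side length, and $2^kQ$ is the cube with the same center as $Q$ and side length $2^k\ell(Q)$. $\|b\|_{\operatorname{BMO}^\beta(\mathbb{R}^n)}=\sup_Q\inf_{c\in\mathbb{R}}\ell(Q)^{-\beta}\int_Q|b-c|\,d\mathcal{H}^\beta_\infty$. For a cube $Q$, $b_Q$ denotes a constant $c\in\mathbb{R}$ at which $\ell(Q)^{-\beta}\int_Q|b-c|\,d\mathcal{H}^\beta_\infty$ attains its minimum over $c\in\mathbb{R}$ (such a minimizer exists for $b\in\operatorname{BMO}^\beta(\mathbb{R}^n)$). *)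

theory Defs
  imports "HOL-Analysis.Analysis"
begin

definition omega :: "real \<Rightarrow> real" where
  "omega \<beta> = pi powr (\<beta> / 2) / Gamma (\<beta> / 2 + 1)"

text \<open>Hausdorff content of dimension beta in R^n (countable covers by Euclidean balls;
  radius-0 balls are empty, so finite covers are included).\<close>
definition hcontent :: "real \<Rightarrow> (real ^ 'n) set \<Rightarrow> ennreal" where
  "hcontent \<beta> E = (INF (x, r) \<in> {(x :: nat \<Rightarrow> real ^ 'n, r :: nat \<Rightarrow> real).
        (\<forall>i. r i \<ge> 0) \<and> E \<subseteq> (\<Union>i. ball (x i) (r i))}.
      (\<Sum>i. ennreal (omega \<beta> * r i powr \<beta>)))"

definition choquet :: "real \<Rightarrow> (real ^ 'n) set \<Rightarrow> (real ^ 'n \<Rightarrow> real) \<Rightarrow> ennreal" where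
  "choquet \<beta> \<Omega> g = (\<integral>\<^sup>+ t. indicator {0..} t * hcontent \<beta> {x \<in> \<Omega>. g x > t} \<partial>lborel)"

definition cube :: "real ^ 'n \<Rightarrow> real \<Rightarrow> (real ^ 'n) set" where
  "cube x l = {y. \<forall>i. \<bar>y $ i - x $ i\<bar> \<le> l / 2}"

definition osc :: "real \<Rightarrow> (real ^ 'n \<Rightarrow> real) \<Rightarrow> real ^ 'n \<Rightarrow> real \<Rightarrow> real \<Rightarrow> ennreal" where
  "osc \<beta> b x l c = ennreal (l powr (- \<beta>)) * choquet \<beta> (cube x l) (\<lambda>y. \<bar>b y - c\<bar>)"

definition bmo_norm :: "real \<Rightarrow> (real ^ 'n \<Rightarrow> real) \<Rightarrow> ennreal" where
  "bmo_norm \<beta> b = (SUP (x, l) \<in> {(x, l). l > 0}. INF c. osc \<beta> b x l c)"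

definition BMO :: "real \<Rightarrow> (real ^ 'n \<Rightarrow> real) set" where
  "BMO \<beta> = {b. bmo_norm \<beta> b < \<infinity>}"

end

theory Submission
  imports Defs
begin

lemma antimono_measurable:
  fixes f :: "real \<Rightarrow> ennreal"
  assumes "\<And>s t. s \<le> t \<Longrightarrow> f t \<le> f s"
  shows "f \<in> borel_measurable borel"
proof (rule borel_measurableI_greater)
  fix y
  have "is_interval {x. y < f x}"
    unfolding is_interval_1 using assms by (auto intro: less_le_trans)
  then show "{x \<in> space borel. y < f x} \<in> sets borel"
    using real_interval_borel_measurable by simp
qed

lemma INF_add_const_set:
  fixes f :: "'a \<Rightarrow> ennreal"
  assumes "S \<noteq> {}"
  shows "(INF i\<in>S. f i + c) = (INF i\<in>S. f i) + c"
  using continuous_at_Inf_mono[of "\<lambda>x. x + c" "f`S"] assms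
  using continuous_add[of "at_right (Inf (f`S))", of "\<lambda>x. x" "\<lambda>x. c"]
  by (auto simp: mono_def image_comp)

lemma le_INF_add:
  fixes f g :: "'a \<Rightarrow> ennreal"
  assumes "\<And>a b. a \<in> S \<Longrightarrow> b \<in> T \<Longrightarrow> K \<le> f a + g b"
  shows "K \<le> (INF a\<in>S. f a) + (INF b\<in>T. g b)"
proof (cases "S = {} \<or> T = {}")
  case True then show ?thesis by auto
next
  case False
  have "K \<le> (INF a\<in>S. f a + (INF b\<in>T. g b))"
  proof (rule INF_greatest)
    fix a assume a: "a \<in> S"
    have "K \<le> (INF b\<in>T. f a + g b)" using assms a by (auto intro: INF_greatest)
    also have "\<dots> = f a + (INF b\<in>T. g b)"
      using INF_add_const_set[of T g "f a"] False by (simp add: add.commute)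
    finally show "K \<le> f a + (INF b\<in>T. g b)" .
  qed
  also have "\<dots> = (INF a\<in>S. f a) + (INF b\<in>T. g b)"
    using INF_add_const_set[of S f] False by simp
  finally show ?thesis .
qed

lemma omega_pos: "\<beta> > 0 \<Longrightarrow> omega \<beta> > 0"
  unfolding omega_def by (intro divide_pos_pos) auto

lemma cube_cbox: "cube x l = cbox (x - vec (l/2)) (x + vec (l/2))"
proof -
  have "\<And>y i. (\<bar>y$i - x$i\<bar> \<le> l/2) = (x$i - l/2 \<le> y$i \<and> y$i \<le> x$i + l/2)"
    by arith
  then show ?thesis unfolding cube_def by (simp add: mem_box_cart set_eq_iff)
qed

lemma vec_inner_Basis: "b \<in> Basis \<Longrightarrow> (vec c :: real^'n) \<bullet> b = c"
  by (auto simp: Basis_vec_def inner_axis)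

lemma emeasure_cube:
  assumes "l \<ge> 0"
  shows "emeasure lborel (cube (x::real^'n) l) = ennreal (l ^ CARD('n))"
proof -
  have "emeasure lborel (cube x l) = ennreal (\<Prod>b\<in>Basis. (vec l :: real^'n) \<bullet> b)"
  proof -
    have e: "(x + vec (l/2)) - (x - vec (l/2)) = (vec l :: real^'n)" by (simp add: vec_eq_iff)
    show ?thesis
    unfolding cube_cbox emeasure_lborel_cbox_eq e using assms
    by (auto simp: inner_diff_left inner_add_left vec_inner_Basis)
  qed
  also have "\<dots> = ennreal (l ^ CARD('n))"
    by (simp add: vec_inner_Basis)
  finally show ?thesis .
qed

lemma ball_sub_cube: "ball (y::real^'n) r \<subseteq> cube y (2*r)"
  unfolding cube_def
proof safe
  fix z i assume "z \<in> ball y r"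
  then have "norm (z - y) < r" by (simp add: dist_norm norm_minus_commute)
  moreover have "\<bar>(z - y) $ i\<bar> \<le> norm (z - y)" by (rule component_le_norm_cart)
  ultimately show "\<bar>z $ i - y $ i\<bar> \<le> 2 * r / 2" by simp
qed

lemma cube_mono: "l \<le> l' \<Longrightarrow> cube x l \<subseteq> cube x l'"
  unfolding cube_def
proof safe
  fix y i assume "l \<le> l'" "\<forall>i. \<bar>y $ i - x $ i\<bar> \<le> l / 2"
  then have "\<bar>y $ i - x $ i\<bar> \<le> l / 2" "l \<le> l'" by blast+
  then show "\<bar>y $ i - x $ i\<bar> \<le> l' / 2" by linarith
qed

lemma hcontent_mono: "A \<subseteq> B \<Longrightarrow> hcontent \<beta> A \<le> hcontent \<beta> B"
  unfolding hcontent_def by (rule INF_superset_mono) auto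

lemma choquet_mono_set: "A \<subseteq> B \<Longrightarrow> choquet \<beta> A g \<le> choquet \<beta> B g"
  unfolding choquet_def
  by (intro nn_integral_mono mult_left_mono hcontent_mono) auto

lemma ennreal_term_le_suminf: "(f i :: ennreal) \<le> (\<Sum>j. f j)"
  using sum_le_suminf[of f "{i}"] by simp

lemma powr_cover_ineq:
  fixes r l \<beta> :: real
  assumes "0 \<le> r" "r < l" "\<beta> \<le> real n" "n > 0"
  shows "l powr (\<beta> - real n) * r ^ n \<le> r powr \<beta>"
proof (cases "r = 0")
  case True then show ?thesis using assms by (simp add: zero_power)
next
  case False
  then have r: "r > 0" using assms by simp
  have "r powr \<beta> = r powr (\<beta> - real n) * r powr (real n)"
    by (simp add: powr_add[symmetric])
  also have "\<dots> = r powr (\<beta> - real n) * r ^ n" using r by (simp add: powr_realpow)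
  finally have e: "r powr \<beta> = r powr (\<beta> - real n) * r ^ n" .
  have "l powr (\<beta> - real n) \<le> r powr (\<beta> - real n)"
    using r assms by (intro powr_mono2') auto
  then show ?thesis unfolding e using r by (intro mult_right_mono) auto
qed

lemma ball_term:
  fixes y :: "real^'n"
  assumes "\<beta> > 0" "\<beta> \<le> real CARD('n)" "0 \<le> r" "r < l"
  shows "ennreal (omega \<beta> * l powr (\<beta> - real CARD('n)) / 2 ^ CARD('n)) * emeasure lborel (ball y r)
     \<le> ennreal (omega \<beta> * r powr \<beta>)"
proof -
  let ?c = "omega \<beta> * l powr (\<beta> - real CARD('n)) / 2 ^ CARD('n)"
  have w: "omega \<beta> > 0" using omega_pos assms by simp
  have "emeasure lborel (ball y r) \<le> emeasure lborel (cube y (2*r))"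
    by (intro emeasure_mono ball_sub_cube) (simp add: cube_cbox)
  also have "\<dots> = ennreal ((2*r) ^ CARD('n))" using assms by (simp add: emeasure_cube)
  finally have "ennreal ?c * emeasure lborel (ball y r) \<le> ennreal ?c * ennreal ((2*r) ^ CARD('n))"
    by (intro mult_left_mono) auto
  also have "\<dots> = ennreal (?c * (2*r) ^ CARD('n))"
    by (rule ennreal_mult[symmetric]) (use w assms in auto)
  also have "?c * (2*r) ^ CARD('n) = omega \<beta> * (l powr (\<beta> - real CARD('n)) * r ^ CARD('n))"
    by (simp add: power_mult_distrib)
  also have "\<dots> \<le> omega \<beta> * r powr \<beta>"
    using w assms powr_cover_ineq[of r l \<beta> "CARD('n)"] by (intro mult_left_mono) auto
  finally show ?thesis by (simp add: ennreal_leI order_trans)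
qed

lemma sum_balls_ge:
  fixes xa :: "nat \<Rightarrow> real^'n"
  assumes "\<beta> > 0" "\<beta> \<le> real CARD('n)" "\<And>i. 0 \<le> ra i" "\<And>i. ra i < l"
  shows "ennreal (omega \<beta> * l powr (\<beta> - real CARD('n)) / 2 ^ CARD('n)) * emeasure lborel (\<Union>i. ball (xa i) (ra i))
     \<le> (\<Sum>i. ennreal (omega \<beta> * ra i powr \<beta>))"
proof -
  let ?c = "ennreal (omega \<beta> * l powr (\<beta> - real CARD('n)) / 2 ^ CARD('n))"
  have "emeasure lborel (\<Union>i. ball (xa i) (ra i)) \<le> (\<Sum>i. emeasure lborel (ball (xa i) (ra i)))"
    by (rule emeasure_subadditive_countably) auto
  then have "?c * emeasure lborel (\<Union>i. ball (xa i) (ra i)) \<le> ?c * (\<Sum>i. emeasure lborel (ball (xa i) (ra i)))"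
    by (rule mult_left_mono) auto
  also have "\<dots> = (\<Sum>i. ?c * emeasure lborel (ball (xa i) (ra i)))" by simp
  also have "\<dots> \<le> (\<Sum>i. ennreal (omega \<beta> * ra i powr \<beta>))"
    by (intro suminf_le ball_term assms) auto
  finally show ?thesis .
qed

lemma cover_lower:
  fixes x :: "real^'n" and xa xb :: "nat \<Rightarrow> real^'n"
  assumes b: "\<beta> > 0" "\<beta> \<le> real CARD('n)" and l: "l > 0"
    and ra: "\<And>i. 0 \<le> ra i" and rb: "\<And>i. 0 \<le> rb i"
    and cov: "cube x l \<subseteq> (\<Union>i. ball (xa i) (ra i)) \<union> (\<Union>i. ball (xb i) (rb i))"
  shows "ennreal (omega \<beta> / 2 ^ CARD('n) * l powr \<beta>)
     \<le> (\<Sum>i. ennreal (omega \<beta> * ra i powr \<beta>)) + (\<Sum>i. ennreal (omega \<beta> * rb i powr \<beta>))"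
    (is "ennreal ?K \<le> ?SA + ?SB")
proof -
  have w: "omega \<beta> > 0" using omega_pos b by simp
  have K: "?K \<le> omega \<beta> * l powr \<beta>"
  proof -
    have "(1::real) \<le> 2 ^ CARD('n)" by simp
    then have "omega \<beta> / 2 ^ CARD('n) \<le> omega \<beta>" using w
      by (simp add: divide_le_eq)
    then show ?thesis using l by (intro mult_right_mono) auto
  qed
  have big: "ennreal ?K \<le> ennreal (omega \<beta> * r powr \<beta>)" if "l \<le> r" for r
  proof -
    have "l powr \<beta> \<le> r powr \<beta>" using that l b by (intro powr_mono2) auto
    then show ?thesis using K w by (intro ennreal_leI) (meson mult_left_mono less_imp_le order_trans)
  qed
  show ?thesis
  proof (cases "\<exists>i. l \<le> ra i")
    case True
    then obtain i where "l \<le> ra i" by blast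
    then have "ennreal ?K \<le> ennreal (omega \<beta> * ra i powr \<beta>)" by (rule big)
    also have "\<dots> \<le> ?SA" by (rule ennreal_term_le_suminf)
    also have "\<dots> \<le> ?SA + ?SB" by simp
    finally show ?thesis .
  next
    case Fa: False
    show ?thesis
    proof (cases "\<exists>i. l \<le> rb i")
      case True
      then obtain i where "l \<le> rb i" by blast
      then have "ennreal ?K \<le> ennreal (omega \<beta> * rb i powr \<beta>)" by (rule big)
      also have "\<dots> \<le> ?SB" by (rule ennreal_term_le_suminf)
      also have "\<dots> \<le> ?SA + ?SB" by simp
      finally show ?thesis .
    next
      case False
      let ?c = "ennreal (omega \<beta> * l powr (\<beta> - real CARD('n)) / 2 ^ CARD('n))"
      let ?UA = "\<Union>i. ball (xa i) (ra i)" and ?UB = "\<Union>i. ball (xb i) (rb i)"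
      have "emeasure lborel (cube x l) \<le> emeasure lborel (?UA \<union> ?UB)"
        by (intro emeasure_mono cov) auto
      also have "\<dots> \<le> emeasure lborel ?UA + emeasure lborel ?UB"
        by (intro emeasure_subadditive) auto
      finally have "?c * emeasure lborel (cube x l) \<le> ?c * (emeasure lborel ?UA + emeasure lborel ?UB)"
        by (rule mult_left_mono) auto
      also have "\<dots> = ?c * emeasure lborel ?UA + ?c * emeasure lborel ?UB"
        by (simp add: distrib_left)
      also have "\<dots> \<le> ?SA + ?SB"
        using Fa False by (intro add_mono sum_balls_ge b ra rb) (auto simp: not_le)
      finally have *: "?c * emeasure lborel (cube x l) \<le> ?SA + ?SB" .
      have "?c * emeasure lborel (cube x l) = ?c * ennreal (l ^ CARD('n))"
        using l by (simp add: emeasure_cube)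
      also have "\<dots> = ennreal (omega \<beta> * l powr (\<beta> - real CARD('n)) / 2 ^ CARD('n) * l ^ CARD('n))"
        by (rule ennreal_mult[symmetric]) (use w l in auto)
      also have "omega \<beta> * l powr (\<beta> - real CARD('n)) / 2 ^ CARD('n) * l ^ CARD('n) = ?K"
      proof -
        have "l powr (\<beta> - real CARD('n)) * l ^ CARD('n) = l powr \<beta>"
          using l by (simp add: powr_realpow[symmetric] powr_add[symmetric])
        then show ?thesis by (simp add: field_simps)
      qed
      finally show ?thesis using * by simp
    qed
  qed
qed

lemma hcontent_union_lower:
  fixes x :: "real^'n"
  assumes b: "\<beta> > 0" "\<beta> \<le> real CARD('n)" and l: "l > 0"
    and cov: "cube x l \<subseteq> A \<union> B"
  shows "ennreal (omega \<beta> / 2 ^ CARD('n) * l powr \<beta>) \<le> hcontent \<beta> A + hcontent \<beta> B"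
  unfolding hcontent_def
proof (rule le_INF_add, clarsimp)
  fix xa ra xb rb
  assume h1: "\<forall>i. 0 \<le> ra (i::nat)" and h2: "A \<subseteq> (\<Union>i. ball ((xa::nat\<Rightarrow>real^'n) i) (ra i))"
    and h3: "\<forall>i. 0 \<le> rb (i::nat)" and h4: "B \<subseteq> (\<Union>i. ball ((xb::nat\<Rightarrow>real^'n) i) (rb i))"
  have c: "cube x l \<subseteq> (\<Union>i. ball (xa i) (ra i)) \<union> (\<Union>i. ball (xb i) (rb i))"
    using cov h2 h4 by blast
  have e: "omega \<beta> / 2 ^ CARD('n) * l powr \<beta> = omega \<beta> * l powr \<beta> / 2 ^ CARD('n)" by simp
  show "ennreal (omega \<beta> * l powr \<beta> / 2 ^ CARD('n))
     \<le> (\<Sum>i. ennreal (omega \<beta> * ra i powr \<beta>)) + (\<Sum>i. ennreal (omega \<beta> * rb i powr \<beta>))"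
    using cover_lower[OF b l _ _ c] h1 h3 unfolding e by blast
qed

lemma choquet_meas:
  "(\<lambda>t::real. indicator {0..} t * hcontent \<beta> {x \<in> \<Omega>. g x > t}) \<in> borel_measurable lborel"
proof -
  have "(\<lambda>t::real. hcontent \<beta> {x \<in> \<Omega>. g x > t}) \<in> borel_measurable borel"
    by (rule antimono_measurable) (intro hcontent_mono, auto)
  then show ?thesis by measurable
qed

lemma step_ineq:
  fixes x :: "real^'n" and b :: "real^'n \<Rightarrow> real"
  assumes bt: "\<beta> > 0" "\<beta> \<le> real CARD('n)" and l: "l > 0"
  shows "ennreal (\<bar>ca - cb\<bar> / 2) * ennreal (omega \<beta> / 2 ^ CARD('n) * l powr \<beta>)
    \<le> choquet \<beta> (cube x l) (\<lambda>y. \<bar>b y - ca\<bar>) + choquet \<beta> (cube x l) (\<lambda>y. \<bar>b y - cb\<bar>)"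
proof -
  let ?K = "ennreal (omega \<beta> / 2 ^ CARD('n) * l powr \<beta>)"
  let ?d = "\<bar>ca - cb\<bar> / 2"
  let ?F1 = "\<lambda>t. hcontent \<beta> {y \<in> cube x l. \<bar>b y - ca\<bar> > t}"
  let ?F2 = "\<lambda>t. hcontent \<beta> {y \<in> cube x l. \<bar>b y - cb\<bar> > t}"
  have "ennreal ?d * ?K = ?K * emeasure lborel {0..<?d}" by (simp add: mult.commute)
  also have "\<dots> = (\<integral>\<^sup>+ t. ?K * indicator {0..<?d} t \<partial>lborel)"
    by (rule nn_integral_cmult_indicator[symmetric]) simp
  also have "\<dots> \<le> (\<integral>\<^sup>+ t. indicator {0..} t * ?F1 t + indicator {0..} t * ?F2 t \<partial>lborel)"
  proof (rule nn_integral_mono)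
    fix t :: real
    show "?K * indicator {0..<?d} t \<le> indicator {0..} t * ?F1 t + indicator {0..} t * ?F2 t"
    proof (cases "0 \<le> t \<and> t < ?d")
      case True
      have "cube x l \<subseteq> {y \<in> cube x l. \<bar>b y - ca\<bar> > t} \<union> {y \<in> cube x l. \<bar>b y - cb\<bar> > t}"
        using True by auto
      then have "?K \<le> ?F1 t + ?F2 t" by (rule hcontent_union_lower[OF bt l])
      then show ?thesis using True by simp
    next
      case False then show ?thesis by auto
    qed
  qed
  also have "\<dots> = choquet \<beta> (cube x l) (\<lambda>y. \<bar>b y - ca\<bar>) + choquet \<beta> (cube x l) (\<lambda>y. \<bar>b y - cb\<bar>)"
    unfolding choquet_def by (rule nn_integral_add) (rule choquet_meas)+
  finally show ?thesis .
qed

theorem lemma2p7: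
  fixes \<beta> :: real and b :: "real ^ 'n \<Rightarrow> real"
    and bQ :: "real ^ 'n \<Rightarrow> real \<Rightarrow> real"
  assumes "0 < \<beta>" and "\<beta> \<le> real CARD('n)"
    and "b \<in> BMO \<beta>"
    and "\<And>x l c. l > 0 \<Longrightarrow> osc \<beta> b x l (bQ x l) \<le> osc \<beta> b x l c"
  shows "\<exists>C > 0. \<forall>x l (k::nat). l > 0 \<longrightarrow>
           ennreal \<bar>bQ x (2 ^ k * l) - bQ x l\<bar> \<le> ennreal (C * real k) * bmo_norm \<beta> b"
proof -
  note bt = assms(1,2)
  define Nb where "Nb = bmo_norm \<beta> b"
  have fin: "Nb < \<infinity>" using assms(3) unfolding BMO_def Nb_def by simp
  define Nr where "Nr = enn2real Nb"
  have NbNr: "Nb = ennreal Nr" using fin unfolding Nr_def by (cases Nb) auto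
  have Nr0: "Nr \<ge> 0" unfolding Nr_def by simp
  define K0 where "K0 = omega \<beta> / 2 ^ CARD('n)"
  have K0: "K0 > 0" unfolding K0_def using omega_pos[OF assms(1)] by simp
  define C where "C = 2 * (1 + 2 powr \<beta>) / K0"
  have C: "C > 0" unfolding C_def using K0 by (intro divide_pos_pos mult_pos_pos add_pos_pos) auto
  have osc_le: "osc \<beta> b x l (bQ x l) \<le> Nb" if l: "l > 0" for x l
  proof -
    have "osc \<beta> b x l (bQ x l) \<le> (INF c. osc \<beta> b x l c)"
      by (rule INF_greatest) (rule assms(4)[OF l])
    also have "\<dots> \<le> Nb" unfolding Nb_def bmo_norm_def
      by (rule SUP_upper2[of "(x, l)"]) (use l in auto)
    finally show ?thesis .
  qed
  have ch_le: "choquet \<beta> (cube x l) g \<le> ennreal (l powr \<beta>) * osc \<beta> b x l c"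
    if l: "l > 0" and g: "g = (\<lambda>y. \<bar>b y - c\<bar>)" for x l c g
  proof -
    have "ennreal (l powr \<beta>) * osc \<beta> b x l c
        = ennreal (l powr \<beta>) * ennreal (l powr (- \<beta>)) * choquet \<beta> (cube x l) g"
      unfolding osc_def g by (simp add: mult.assoc)
    also have "ennreal (l powr \<beta>) * ennreal (l powr (- \<beta>)) = ennreal (l powr \<beta> * l powr (- \<beta>))"
      by (rule ennreal_mult[symmetric]) auto
    also have "l powr \<beta> * l powr (- \<beta>) = 1" using l by (simp add: powr_add[symmetric])
    finally show ?thesis by simp
  qed
  have stepb: "\<bar>bQ x (2 * l) - bQ x l\<bar> \<le> C * Nr" if l: "l > 0" for x l
  proof -
    let ?c1 = "bQ x l" and ?c2 = "bQ x (2*l)"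
    let ?d = "\<bar>?c1 - ?c2\<bar>"
    have l2: "2 * l > 0" using l by simp
    have ch1: "choquet \<beta> (cube x l) (\<lambda>y. \<bar>b y - ?c1\<bar>) \<le> ennreal (l powr \<beta>) * Nb"
      using ch_le[OF l refl, where c="?c1" and x=x] osc_le[OF l, of x]
      by (meson mult_left_mono order_trans zero_le)
    have "choquet \<beta> (cube x l) (\<lambda>y. \<bar>b y - ?c2\<bar>) \<le> choquet \<beta> (cube x (2*l)) (\<lambda>y. \<bar>b y - ?c2\<bar>)"
      by (rule choquet_mono_set) (rule cube_mono, use l in simp)
    also have "\<dots> \<le> ennreal ((2*l) powr \<beta>) * Nb"
      using ch_le[OF l2 refl, where c="?c2" and x=x] osc_le[OF l2, of x]
      by (meson mult_left_mono order_trans zero_le)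
    finally have ch2: "choquet \<beta> (cube x l) (\<lambda>y. \<bar>b y - ?c2\<bar>) \<le> ennreal ((2*l) powr \<beta>) * Nb" .
    have "ennreal (?d / 2) * ennreal (K0 * l powr \<beta>)
        \<le> ennreal (l powr \<beta>) * Nb + ennreal ((2*l) powr \<beta>) * Nb"
      using step_ineq[OF bt l, where ca="?c1" and cb="?c2" and x=x and b=b] ch1 ch2 unfolding K0_def
      by (meson add_mono order_trans)
    then have "ennreal (?d / 2 * (K0 * l powr \<beta>)) \<le> ennreal ((l powr \<beta> + (2*l) powr \<beta>) * Nr)"
      unfolding NbNr using K0 Nr0
      by (simp add: ennreal_mult[symmetric] distrib_right ennreal_plus[symmetric] del: ennreal_plus)
    then have "?d / 2 * (K0 * l powr \<beta>) \<le> (l powr \<beta> + (2*l) powr \<beta>) * Nr"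
      using Nr0 by (subst (asm) ennreal_le_iff) auto
    also have "(2*l) powr \<beta> = 2 powr \<beta> * l powr \<beta>" using l by (simp add: powr_mult)
    finally have "(?d * K0 / 2) * l powr \<beta> \<le> ((1 + 2 powr \<beta>) * Nr) * l powr \<beta>"
      by (simp add: algebra_simps)
    then have "?d * K0 / 2 \<le> (1 + 2 powr \<beta>) * Nr" using l by simp
    then have "?d \<le> 2 * (1 + 2 powr \<beta>) * Nr / K0" using K0 by (simp add: field_simps)
    then show ?thesis unfolding C_def by (simp add: abs_minus_commute)
  qed
  have ind: "\<bar>bQ x (2 ^ k * l) - bQ x l\<bar> \<le> C * real k * Nr" if l: "l > 0" for x and l :: real and k :: nat
  proof (induction k)
    case 0 then show ?case by simp
  next
    case (Suc k)
    have "\<bar>bQ x (2 ^ Suc k * l) - bQ x l\<bar>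
        \<le> \<bar>bQ x (2 * (2 ^ k * l)) - bQ x (2 ^ k * l)\<bar> + \<bar>bQ x (2 ^ k * l) - bQ x l\<bar>"
      by (simp add: mult.assoc)
    also have "\<dots> \<le> C * Nr + C * real k * Nr"
      using stepb[of "2 ^ k * l" x] l Suc by (intro add_mono) auto
    finally show ?case by (simp add: algebra_simps)
  qed
  show ?thesis
  proof (intro exI[of _ C] conjI allI impI C)
    fix x and l :: real and k :: nat assume l: "l > 0"
    have "ennreal \<bar>bQ x (2 ^ k * l) - bQ x l\<bar> \<le> ennreal (C * real k * Nr)"
      using ind[OF l] by (rule ennreal_leI)
    also have "\<dots> = ennreal (C * real k) * bmo_norm \<beta> b"
      unfolding Nb_def[symmetric] NbNr using C Nr0 by (simp add: ennreal_mult)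
    finally show "ennreal \<bar>bQ x (2 ^ k * l) - bQ x l\<bar> \<le> ennreal (C * real k) * bmo_norm \<beta> b" .
  qed
qed

end
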